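(* Let $n\ge3$, $k\ge0$, let $S\subseteq\mathrm{Inc}(A,B)$ be an independent set in $G_n^k$, and let $i\in[n+k]$. Then (1) $\mathrm{DFEL}(i,S)$ is a subset of $\mathrm{Inc}(A,B)$ that is independent in $G_n^k$; (2) $\mathrm{DLEF}(i,S)$ is a subset of $\mathrm{Inc}(A,B)$ that is independent in $G_n^k$; (3) $|\mathrm{DFEL}(i,S)|+|\mathrm{DLEF}(i,S)|=2|S|$.
   Context: For integers $n\ge3$, $k\ge0$, the crown $S_n^k$ is the poset with ground set $A\cup B$, $A=\{a_1,\dots,a_{n+k}\}$, $B=\{b_1,\dots,b_{n+k}\}$, indices cyclic modulo $n+k$; elements of $A$ are pairwise incomparable, as are elements of $B$, and $a_i$ is incomparable to $b_j$ when $j\in\{i,\dots,i+k\}$ (mod $n+k$), while $a_i<b_j$ otherwise. $\mathrm{Inc}(A,B)$ is the set of pairs $(a,b)\in A\times B$ with $a$ incomparable to $b$; $G_n^k$ has vertex set $\mathrm{Inc}(A,B)$ with $(a,b)$ adjacent to $(x,y)$ iff $a<y$ and $x<b$. For an independent $S$ and $i\in[n+k]$, an ordered pair $((a,b),(x,y))$ of elements of $S$ is an expansion blocking pair at $i$ if $a=a_i$, $y=b_{i+k}$, and $x<b$ in $S_n^k$. $\mathrm{FEBP}(i,S)$ is the set of $(a,b)\in S$ for which some $(x,y)\in S$ makes $((a,b),(x,y))$ an expansion blocking pair at $i$; $\mathrm{LEBP}(i,S)$ is the set of $(x,y)\in S$ for which some $(a,b)\in S$ makes $((a,b),(x,y))$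 an expansion blocking pair at $i$. Define $\mathrm{DFEL}(i,S)=(S-\mathrm{FEBP}(i,S))\cup\{(x,b_{i+k+1}):(x,b_{i+k})\in\mathrm{LEBP}(i,S)\}$ and $\mathrm{DLEF}(i,S)=(S-\mathrm{LEBP}(i,S))\cup\{(a_{i-1},b):(a_i,b)\in\mathrm{FEBP}(i,S)\}$. *)

theory Defs
  imports Main
begin

text \<open>Crown S_n^k with indices 0..n+k-1 (cyclic mod n+k). The element a_i is
  encoded by the index i, b_j by j; a pair (a_i,b_j) in A x B by (i,j).\<close>

definition crown_inc :: "nat \<Rightarrow> nat \<Rightarrow> nat \<Rightarrow> nat \<Rightarrow> bool" where
  "crown_inc n k i j \<longleftrightarrow> i < n + k \<and> j < n + k \<and> (j + (n + k) - i) mod (n + k) \<le> k"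

definition crown_less :: "nat \<Rightarrow> nat \<Rightarrow> nat \<Rightarrow> nat \<Rightarrow> bool" where
  "crown_less n k i j \<longleftrightarrow> i < n + k \<and> j < n + k \<and> \<not> (j + (n + k) - i) mod (n + k) \<le> k"

definition Inc :: "nat \<Rightarrow> nat \<Rightarrow> (nat \<times> nat) set" where
  "Inc n k = {(i, j). crown_inc n k i j}"

definition G_adj :: "nat \<Rightarrow> nat \<Rightarrow> nat \<times> nat \<Rightarrow> nat \<times> nat \<Rightarrow> bool" where
  "G_adj n k u v \<longleftrightarrow> crown_less n k (fst u) (snd v) \<and> crown_less n k (fst v) (snd u)"

definition indep_G :: "nat \<Rightarrow> nat \<Rightarrow> (nat \<times> nat) set \<Rightarrow> bool" where
  "indep_G n k S \<longleftrightarrow> S \<subseteq> Inc n k \<and> (\<forall>u\<in>S. \<forall>v\<in>S. \<not> G_adj n k u v)"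

definition exp_blocking_pair :: "nat \<Rightarrow> nat \<Rightarrow> nat \<Rightarrow> (nat \<times> nat) set \<Rightarrow> nat \<times> nat \<Rightarrow> nat \<times> nat \<Rightarrow> bool" where
  "exp_blocking_pair n k i S u v \<longleftrightarrow> u \<in> S \<and> v \<in> S \<and> fst u = i \<and>
     snd v = (i + k) mod (n + k) \<and> crown_less n k (fst v) (snd u)"

definition FEBP :: "nat \<Rightarrow> nat \<Rightarrow> nat \<Rightarrow> (nat \<times> nat) set \<Rightarrow> (nat \<times> nat) set" where
  "FEBP n k i S = {u \<in> S. \<exists>v \<in> S. exp_blocking_pair n k i S u v}"

definition LEBP :: "nat \<Rightarrow> nat \<Rightarrow> nat \<Rightarrow> (nat \<times> nat) set \<Rightarrow> (nat \<times> nat) set" where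
  "LEBP n k i S = {v \<in> S. \<exists>u \<in> S. exp_blocking_pair n k i S u v}"

definition DFEL :: "nat \<Rightarrow> nat \<Rightarrow> nat \<Rightarrow> (nat \<times> nat) set \<Rightarrow> (nat \<times> nat) set" where
  "DFEL n k i S = (S - FEBP n k i S) \<union>
     {(x, (i + k + 1) mod (n + k)) | x. (x, (i + k) mod (n + k)) \<in> LEBP n k i S}"

definition DLEF :: "nat \<Rightarrow> nat \<Rightarrow> nat \<Rightarrow> (nat \<times> nat) set \<Rightarrow> (nat \<times> nat) set" where
  "DLEF n k i S = (S - LEBP n k i S) \<union>
     {((i + (n + k) - 1) mod (n + k), b) | b. (i, b) \<in> FEBP n k i S}"

end

theory Submission
  imports Defs
begin
lemma offs: assumes "(a::nat) < N" "b < N" shows "(b + N - a) mod N = (if a \<le> b then b - a else b + N - a)"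
proof (cases "a \<le> b")
  case True
  have e: "b + N - a = (b - a) + N" using True by simp
  have "(b + N - a) mod N = ((b - a) + N) mod N" by (simp only: e)
  also have "\<dots> = (b - a) mod N" by (rule mod_add_self2)
  also have "\<dots> = b - a" using assms(2) by simp
  finally show ?thesis using True by simp
next
  case False
  have "b + N - a < N" using False assms by simp
  then show ?thesis using False by simp
qed
lemma md: assumes "(a::nat) < 2*N" shows "a mod N = (if a < N then a else a - N)"
proof (cases "a < N")
  case False
  then have "a mod N = (a - N) mod N" by (intro le_mod_geq) simp
  also have "\<dots> = a - N" using assms False by simp
  finally show ?thesis using False by simp
qed simp
lemma inc_iff: "crown_inc n k a b \<longleftrightarrow> a < n+k \<and> b < n+k \<and> ((a \<le> b \<and> b \<le> a+k) \<or> (b < a \<and> b+n \<le> a))"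
  unfolding crown_inc_def by (cases "a < n+k \<and> b < n+k"; cases "a \<le> b") (auto simp: offs)
lemma less_iff: "crown_less n k a b \<longleftrightarrow> a < n+k \<and> b < n+k \<and> ((a \<le> b \<and> a+k < b) \<or> (b < a \<and> a < b+n))"
  unfolding crown_less_def by (cases "a < n+k \<and> b < n+k"; cases "a \<le> b") (auto simp: offs)
lemma ik: assumes "(i::nat) < n+k" shows "(i+k < n+k \<and> (i+k) mod (n+k) = i+k) \<or> (n \<le> i \<and> (i+k) mod (n+k) + n = i)"
proof (cases "i+k < n+k")
  case False
  then have "(i+k) mod (n+k) = (i+k-(n+k)) mod (n+k)" by (intro le_mod_geq) simp
  also have "\<dots> = i+k-(n+k)" using assms by simp
  finally show ?thesis using False by simp
qed simp
lemma ik1: assumes "(n::nat) \<ge> 3" "i < n+k" shows "(i+k+1 < n+k \<and> (i+k+1) mod (n+k) = i+k+1) \<or> (n \<le> i+1 \<and> (i+k+1) mod (n+k) + n = i+1)"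
proof (cases "i+k+1 < n+k")
  case False
  then have "(i+k+1) mod (n+k) = (i+k+1-(n+k)) mod (n+k)" by (intro le_mod_geq) simp
  also have "\<dots> = i+k+1-(n+k)" using assms by simp
  finally show ?thesis using False by simp
qed simp
lemma im1: "(n::nat) \<ge> 3 \<Longrightarrow> i < n+k \<Longrightarrow> (i = 0 \<and> (i + (n+k) - 1) mod (n+k) + 1 = n+k) \<or> (0 < i \<and> (i + (n+k) - 1) mod (n+k) + 1 = i)"
proof (cases i)
  case (Suc m)
  assume "i < n+k"
  then have "i + (n+k) - 1 = m + (n+k)" using Suc by simp
  then show ?thesis using Suc \<open>i<n+k\<close> by simp
qed simp

lemma A1: assumes "n \<ge> 3" "i < n+k" "crown_inc n k i b" "crown_inc n k x ((i+k) mod (n+k))" "crown_less n k x b"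
  shows "crown_inc n k x ((i+k+1) mod (n+k))"
  using assms ik[OF assms(2)] ik1[OF assms(1,2)] unfolding inc_iff less_iff
  by (elim disjE conjE; linarith)

lemma A2: assumes "n \<ge> 3" "i < n+k" "crown_inc n k c ((i+k) mod (n+k))" "crown_less n k c ((i+k+1) mod (n+k))"
  shows "c = i"
  using assms ik[OF assms(2)] ik1[OF assms(1,2)] unfolding inc_iff less_iff
  by (elim disjE conjE; linarith)

lemma A3: assumes "n \<ge> 3" "i < n+k"
  shows "crown_less n k i ((i+k+1) mod (n+k))"
  using assms ik1[OF assms(1,2)] unfolding inc_iff less_iff
  by (elim disjE conjE; linarith)

lemma A4: assumes "n \<ge> 3" "i < n+k" "crown_inc n k i b" "b \<noteq> ((i+k) mod (n+k))"
  shows "crown_inc n k ((i + (n+k) - 1) mod (n+k)) b"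
  using assms ik[OF assms(2)] im1[OF assms(1,2)] unfolding inc_iff less_iff
  by (elim disjE conjE; linarith)

lemma A5: assumes "n \<ge> 3" "i < n+k" "crown_inc n k i d" "crown_less n k ((i + (n+k) - 1) mod (n+k)) d"
  shows "d = ((i+k) mod (n+k))"
  using assms ik[OF assms(2)] im1[OF assms(1,2)] unfolding inc_iff less_iff
  by (elim disjE conjE; linarith)

lemma A6: assumes "n \<ge> 3" "i < n+k"
  shows "crown_less n k ((i + (n+k) - 1) mod (n+k)) ((i+k) mod (n+k))"
  using assms ik[OF assms(2)] im1[OF assms(1,2)] unfolding inc_iff less_iff
  by (elim disjE conjE; linarith)
lemma inc_not_less: "crown_inc n k a b \<Longrightarrow> \<not> crown_less n k a b"
  unfolding crown_inc_def crown_less_def by auto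
lemma not_less_inc: "a < n+k \<Longrightarrow> b < n+k \<Longrightarrow> \<not> crown_less n k a b \<Longrightarrow> crown_inc n k a b"
  unfolding crown_inc_def crown_less_def by auto
lemma G_adj_sym: "G_adj n k u v = G_adj n k v u"
  unfolding G_adj_def by auto
lemma Inc_fin: "finite (Inc n k)"
proof -
  have "Inc n k \<subseteq> {..<n+k} \<times> {..<n+k}" unfolding Inc_def crown_inc_def by auto
  then show ?thesis by (rule finite_subset) auto
qed

lemma img_fst: "\<forall>v\<in>L. snd v = c \<Longrightarrow> {(x, d) | x. (x, c) \<in> L} = (\<lambda>x. (x,d)) ` fst ` L"
proof (intro equalityI subsetI)
  fix z assume "z \<in> {(x, d) | x. (x, c) \<in> L}"
  then obtain x where "z = (x,d)" "(x,c) \<in> L" by blast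
  then show "z \<in> (\<lambda>x. (x,d)) ` fst ` L" by (metis fst_conv image_eqI)
next
  fix z assume "\<forall>v\<in>L. snd v = c" "z \<in> (\<lambda>x. (x,d)) ` fst ` L"
  then obtain v where "v \<in> L" "z = (fst v, d)" by blast
  then show "z \<in> {(x, d) | x. (x, c) \<in> L}" using \<open>\<forall>v\<in>L. snd v = c\<close> by (metis (mono_tags, lifting) mem_Collect_eq prod.collapse)
qed
lemma img_snd: "\<forall>v\<in>F. fst v = c \<Longrightarrow> {(d, b) | b. (c, b) \<in> F} = (\<lambda>b. (d,b)) ` snd ` F"
proof (intro equalityI subsetI)
  fix z assume "z \<in> {(d, b) | b. (c, b) \<in> F}"
  then obtain b where "z = (d,b)" "(c,b) \<in> F" by blast
  then show "z \<in> (\<lambda>b. (d,b)) ` snd ` F" by (metis snd_conv image_eqI)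
next
  fix z assume "\<forall>v\<in>F. fst v = c" "z \<in> (\<lambda>b. (d,b)) ` snd ` F"
  then obtain v where "v \<in> F" "z = (d, snd v)" by blast
  then show "z \<in> {(d, b) | b. (c, b) \<in> F}" using \<open>\<forall>v\<in>F. fst v = c\<close> by (metis (mono_tags, lifting) mem_Collect_eq prod.collapse)
qed
lemma Fd: "u \<in> FEBP n k i S \<longleftrightarrow> u \<in> S \<and> fst u = i \<and> (\<exists>x. (x, (i+k) mod (n+k)) \<in> S \<and> crown_less n k x (snd u))"
  (is "?L \<longleftrightarrow> ?R")
proof
  assume ?L
  then obtain v where "v \<in> S" "u \<in> S" "fst u = i" "snd v = (i+k) mod (n+k)" "crown_less n k (fst v) (snd u)"
    unfolding FEBP_def exp_blocking_pair_def by blast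
  then show ?R by (metis prod.collapse)
next
  assume ?R
  then obtain x where "u \<in> S" "fst u = i" "(x, (i+k) mod (n+k)) \<in> S" "crown_less n k x (snd u)" by blast
  then show ?L unfolding FEBP_def exp_blocking_pair_def by force
qed
lemma Ld: "v \<in> LEBP n k i S \<longleftrightarrow> v \<in> S \<and> snd v = (i+k) mod (n+k) \<and> (\<exists>b. (i, b) \<in> S \<and> crown_less n k (fst v) b)"
  unfolding LEBP_def exp_blocking_pair_def
  by (auto; metis fst_conv snd_conv)

theorem lemma4p8:
  fixes n k i :: nat and S :: "(nat \<times> nat) set"
  assumes "n \<ge> 3" and "indep_G n k S" and "i < n + k"
  shows "indep_G n k (DFEL n k i S) \<and> indep_G n k (DLEF n k i S) \<and>
         card (DFEL n k i S) + card (DLEF n k i S) = 2 * card S"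
proof -
  note n3 = assms(1) and iN = assms(3)
  define IK where "IK = (i+k) mod (n+k)"
  define IK1 where "IK1 = (i+k+1) mod (n+k)"
  define IM where "IM = (i + (n+k) - 1) mod (n+k)"
  define F where "F = FEBP n k i S"
  define L where "L = LEBP n k i S"
  have SI: "S \<subseteq> Inc n k" and noadj: "\<And>u v. u \<in> S \<Longrightarrow> v \<in> S \<Longrightarrow> \<not> G_adj n k u v"
    using assms(2) unfolding indep_G_def by auto
  have incS: "crown_inc n k a b" if "(a,b) \<in> S" for a b using SI that unfolding Inc_def by auto
  have finS: "finite S" using SI Inc_fin finite_subset by blast
  have Fd: "u \<in> F \<longleftrightarrow> u \<in> S \<and> fst u = i \<and> (\<exists>x. (x, IK) \<in> S \<and> crown_less n k x (snd u))" for u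
    unfolding F_def IK_def by (rule Fd)
  have Ld: "v \<in> L \<longleftrightarrow> v \<in> S \<and> snd v = IK \<and> (\<exists>b. (i, b) \<in> S \<and> crown_less n k (fst v) b)" for v
    unfolding L_def IK_def by (rule Ld)
  have DF: "DFEL n k i S = (S - F) \<union> (\<lambda>x. (x, IK1)) ` (fst ` L)"
  proof -
    have "\<forall>v\<in>L. snd v = IK" using Ld by blast
    then show ?thesis unfolding DFEL_def F_def[symmetric] L_def[symmetric] IK_def[symmetric] IK1_def[symmetric]
      by (simp only: img_fst)
  qed
  have DL: "DLEF n k i S = (S - L) \<union> (\<lambda>b. (IM, b)) ` (snd ` F)"
  proof -
    have "\<forall>v\<in>F. fst v = i" using Fd by blast
    then show ?thesis unfolding DLEF_def F_def[symmetric] L_def[symmetric] IM_def[symmetric]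
      by (simp only: img_snd)
  qed
  have newF: "crown_inc n k x IK1 \<and> (x, IK1) \<notin> S \<and> (x, IK) \<in> S" if "x \<in> fst ` L" for x
  proof -
    from that obtain b where xS: "(x, IK) \<in> S" and bS: "(i,b) \<in> S" and lx: "crown_less n k x b"
      using Ld by force
    have "crown_inc n k x IK1" using A1[OF n3 iN incS[OF bS] _ lx] incS[OF xS] unfolding IK_def IK1_def by blast
    moreover have "(x, IK1) \<notin> S"
    proof
      assume "(x, IK1) \<in> S"
      moreover have "G_adj n k (i,b) (x, IK1)" unfolding G_adj_def using A3[OF n3 iN] lx IK1_def by simp
      ultimately show False using noadj bS by blast
    qed
    ultimately show ?thesis using xS by blast
  qed
  have newL: "crown_inc n k IM b \<and> (IM, b) \<notin> S \<and> (i, b) \<in> S" if "b \<in> snd ` F" for b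
  proof -
    from that obtain x where bS: "(i, b) \<in> S" and xS: "(x,IK) \<in> S" and lx: "crown_less n k x b"
      using Fd by force
    have "b \<noteq> IK" using lx incS[OF xS] inc_not_less by blast
    then have "crown_inc n k IM b" using A4[OF n3 iN incS[OF bS]] unfolding IK_def IM_def by blast
    moreover have "(IM, b) \<notin> S"
    proof
      assume "(IM, b) \<in> S"
      moreover have "G_adj n k (IM, b) (x, IK)" unfolding G_adj_def using A6[OF n3 iN] lx IK_def IM_def by simp
      ultimately show False using noadj xS by blast
    qed
    ultimately show ?thesis using bS by blast
  qed
  have adjF: "\<not> G_adj n k (x, IK1) v" if x: "x \<in> fst ` L" and v: "v \<in> DFEL n k i S" for x v
  proof
    assume adj: "G_adj n k (x, IK1) v"
    have xi: "crown_inc n k x IK1" and xS: "(x, IK) \<in> S" using newF[OF x] by auto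
    show False
    proof (cases "v \<in> S - F")
      case True
      obtain c d where v': "v = (c,d)" by force
      have cdS: "(c,d) \<in> S" using True v' by auto
      have l1: "crown_less n k x d" and l2: "crown_less n k c IK1" using adj v' unfolding G_adj_def by auto
      have "\<not> crown_less n k c IK" using noadj[OF xS cdS] l1 unfolding G_adj_def by auto
      moreover have "c < n+k" "IK < n+k" using incS[OF cdS] incS[OF xS] unfolding crown_inc_def by auto
      ultimately have "crown_inc n k c IK" using not_less_inc by blast
      then have "c = i" using A2[OF n3 iN _ l2[unfolded IK1_def]] unfolding IK_def by blast
      then have "(c,d) \<in> F" using Fd cdS xS l1 by auto
      then show False using True v' by auto
    next
      case False
      then obtain x' where "v = (x', IK1)" using v DF by auto
      then show False using adj xi inc_not_less unfolding G_adj_def by auto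
    qed
  qed
  have indF: "indep_G n k (DFEL n k i S)"
    unfolding indep_G_def
  proof
    show "DFEL n k i S \<subseteq> Inc n k" using SI newF unfolding DF Inc_def by auto
    show "\<forall>u\<in>DFEL n k i S. \<forall>v\<in>DFEL n k i S. \<not> G_adj n k u v"
    proof (intro ballI)
      fix u v assume u: "u \<in> DFEL n k i S" and v: "v \<in> DFEL n k i S"
      show "\<not> G_adj n k u v"
      proof (cases "u \<in> S - F")
        case True
        show ?thesis
        proof (cases "v \<in> S - F")
          case True
          then show ?thesis using \<open>u \<in> S - F\<close> noadj by auto
        next
          case False
          then obtain x where "x \<in> fst ` L" "v = (x, IK1)" using v DF by auto
          then show ?thesis using adjF[of x u] u G_adj_sym by metis
        qed
      next
        case False
        then obtain x where "x \<in> fst ` L" "u = (x, IK1)" using u DF by auto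
        then show ?thesis using adjF v by auto
      qed
    qed
  qed
  have adjL: "\<not> G_adj n k (IM, b) v" if b: "b \<in> snd ` F" and v: "v \<in> DLEF n k i S" for b v
  proof
    assume adj: "G_adj n k (IM, b) v"
    have bi: "crown_inc n k IM b" and bS: "(i, b) \<in> S" using newL[OF b] by auto
    show False
    proof (cases "v \<in> S - L")
      case True
      obtain c d where v': "v = (c,d)" by force
      have cdS: "(c,d) \<in> S" using True v' by auto
      have l1: "crown_less n k IM d" and l2: "crown_less n k c b" using adj v' unfolding G_adj_def by auto
      have "\<not> crown_less n k i d" using noadj[OF bS cdS] l2 unfolding G_adj_def by auto
      moreover have "d < n+k" using incS[OF cdS] unfolding crown_inc_def by auto
      ultimately have "crown_inc n k i d" using not_less_inc iN by blast
      then have "d = IK" using A5[OF n3 iN _ l1[unfolded IM_def]] unfolding IK_def by blast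
      then have "(c,d) \<in> L" using Ld cdS bS l2 by auto
      then show False using True v' by auto
    next
      case False
      then obtain b' where "v = (IM, b')" "b' \<in> snd ` F" using v DL by auto
      then show False using adj newL inc_not_less unfolding G_adj_def by auto
    qed
  qed
  have indL: "indep_G n k (DLEF n k i S)"
    unfolding indep_G_def
  proof
    show "DLEF n k i S \<subseteq> Inc n k" using SI newL unfolding DL Inc_def by auto
    show "\<forall>u\<in>DLEF n k i S. \<forall>v\<in>DLEF n k i S. \<not> G_adj n k u v"
    proof (intro ballI)
      fix u v assume u: "u \<in> DLEF n k i S" and v: "v \<in> DLEF n k i S"
      show "\<not> G_adj n k u v"
      proof (cases "u \<in> S - L")
        case True
        show ?thesis
        proof (cases "v \<in> S - L")
          case True
          then show ?thesis using \<open>u \<in> S - L\<close> noadj by auto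
        next
          case False
          then obtain b where "b \<in> snd ` F" "v = (IM, b)" using v DL by auto
          then show ?thesis using adjL[of b u] u G_adj_sym by metis
        qed
      next
        case False
        then obtain b where "b \<in> snd ` F" "u = (IM, b)" using u DL by auto
        then show ?thesis using adjL v by auto
      qed
    qed
  qed
  have FS: "F \<subseteq> S" and LS: "L \<subseteq> S" using Fd Ld by auto
  have finF: "finite F" and finL: "finite L" using FS LS finS finite_subset by auto
  have cL: "card ((\<lambda>x. (x, IK1)) ` (fst ` L)) = card L"
  proof -
    have "inj_on fst L" using Ld by (auto simp: inj_on_def prod_eq_iff)
    then have "card (fst ` L) = card L" by (rule card_image)
    moreover have "inj_on (\<lambda>x. (x, IK1)) (fst ` L)" by (auto simp: inj_on_def)
    ultimately show ?thesis by (simp add: card_image)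
  qed
  have cF: "card ((\<lambda>b. (IM, b)) ` (snd ` F)) = card F"
  proof -
    have "inj_on snd F" using Fd by (auto simp: inj_on_def prod_eq_iff)
    then have "card (snd ` F) = card F" by (rule card_image)
    moreover have "inj_on (\<lambda>b. (IM, b)) (snd ` F)" by (auto simp: inj_on_def)
    ultimately show ?thesis by (simp add: card_image)
  qed
  have c1: "card (DFEL n k i S) = card (S - F) + card L"
    unfolding DF using newF finS finL cL by (subst card_Un_disjoint) auto
  have c2: "card (DLEF n k i S) = card (S - L) + card F"
    unfolding DL using newL finS finF cF by (subst card_Un_disjoint) auto
  have "card (S - F) = card S - card F" using FS finS by (simp add: card_Diff_subset finite_subset)
  moreover have "card (S - L) = card S - card L" using LS finS by (simp add: card_Diff_subset finite_subset)
  moreover have "card F \<le> card S" "card L \<le> card S" using FS LS finS card_mono by auto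
  ultimately have "card (DFEL n k i S) + card (DLEF n k i S) = 2 * card S" using c1 c2 by simp
  then show ?thesis using indF indL by blast
qed
end
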